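(* Let $\mathcal{H}$ be a separable infinite-dimensional complex Hilbert space, let $T\in\mathscr{B}(\mathcal{H})$ have dense range and let $\varepsilon>0$. Then the map $x_0\mapsto y_{x_0,\varepsilon}$, from the open set $\{x_0\in\mathcal{H}:\|x_0\|>\varepsilon\}$ to $\mathcal{H}$, is continuous (for the norm topology).
   Context: For $T\in\mathscr{B}(\mathcal{H})$ with dense range, $x_0\neq 0$ and $0<\varepsilon<\|x_0\|$, the extremal vector $y_{x_0,\varepsilon}$ is the unique vector $y_0\in\mathcal{H}$ with $\|Ty_0-x_0\|\leqslant\varepsilon$ and $\|y_0\|=\inf\{\|y\|:\|Ty-x_0\|\leqslant\varepsilon\}$. *)

theory Defs
  imports "HOL-Analysis.Analysis"
begin

class complex_inner_space = real_normed_vector +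
  fixes cscale :: "complex \<Rightarrow> 'a \<Rightarrow> 'a" (infixr \<open>*\<^sub>C\<close> 75)
    and cinner :: "'a \<Rightarrow> 'a \<Rightarrow> complex"
  assumes cscale_add_right: "a *\<^sub>C (x + y) = a *\<^sub>C x + a *\<^sub>C y"
    and cscale_add_left: "(a + b) *\<^sub>C x = a *\<^sub>C x + b *\<^sub>C x"
    and cscale_cscale: "a *\<^sub>C (b *\<^sub>C x) = (a * b) *\<^sub>C x"
    and cscale_one: "1 *\<^sub>C x = x"
    and cscale_of_real: "(complex_of_real r) *\<^sub>C x = r *\<^sub>R x"
    and cinner_commute: "cinner x y = cnj (cinner y x)"
    and cinner_add_left: "cinner (x + y) z = cinner x z + cinner y z"
    and cinner_cscale_left: "cinner (a *\<^sub>C x) y = cnj a * cinner x y"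
    and norm_eq_sqrt_cinner: "norm x = sqrt (Re (cinner x x))"

class complex_hilbert_space = complex_inner_space + complete_space

definition cspan :: "'a::complex_inner_space set \<Rightarrow> 'a set" where
  "cspan S = {y. \<exists>F c. finite F \<and> F \<subseteq> S \<and> y = (\<Sum>x\<in>F. c x *\<^sub>C x)}"

definition infinite_dimensional :: "'a::complex_inner_space itself \<Rightarrow> bool" where
  "infinite_dimensional _ \<longleftrightarrow> \<not> (\<exists>S::'a set. finite S \<and> cspan S = UNIV)"

definition separable_space :: "'a::topological_space itself \<Rightarrow> bool" where
  "separable_space _ \<longleftrightarrow> (\<exists>D::'a set. countable D \<and> closure D = UNIV)"

definition bounded_clinear :: "('a::complex_inner_space \<Rightarrow> 'b::complex_inner_space) \<Rightarrow> bool" where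
  "bounded_clinear T \<longleftrightarrow> bounded_linear T \<and> (\<forall>c x. T (c *\<^sub>C x) = c *\<^sub>C T x)"

definition extremal_vector ::
  "('a::complex_inner_space \<Rightarrow> 'a) \<Rightarrow> 'a \<Rightarrow> real \<Rightarrow> 'a" where
  "extremal_vector T x0 \<epsilon> =
     (THE y0. norm (T y0 - x0) \<le> \<epsilon> \<and>
              norm y0 = Inf {norm y | y. norm (T y - x0) \<le> \<epsilon>})"

end

theory Submission
  imports Defs
begin

lemma norm_sq_cinner: "(norm x)^2 = Re (cinner x (x::'a::complex_inner_space))"
proof -
  have e: "norm x = sqrt (Re (cinner x x))" by (rule norm_eq_sqrt_cinner)
  then have "Re (cinner x x) \<ge> 0" using norm_ge_zero real_sqrt_ge_0_iff by metis
  then show ?thesis using e by simp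
qed

lemma Re_cinner_sym: "Re (cinner x y) = Re (cinner y (x::'a::complex_inner_space))"
  by (subst cinner_commute) simp

lemma Re_cinner_add_right: "Re (cinner x (y + z)) = Re (cinner x y) + Re (cinner x (z::'a::complex_inner_space))"
  by (metis Re_cinner_sym cinner_add_left plus_complex.sel(1))

lemma Re_cinner_scaleR_left: "Re (cinner (r *\<^sub>R x) y) = r * Re (cinner x (y::'a::complex_inner_space))"
  using cscale_of_real[of r x, symmetric] cinner_cscale_left[of "complex_of_real r" x y] by simp

lemma Re_cinner_minus_left: "Re (cinner (- x) y) = - Re (cinner x (y::'a::complex_inner_space))"
  using Re_cinner_scaleR_left[of "-1" x y] by simp

lemma Re_cinner_minus_right: "Re (cinner x (- y)) = - Re (cinner x (y::'a::complex_inner_space))"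
  using Re_cinner_minus_left Re_cinner_sym by metis

lemma Re_cinner_diff_left: "Re (cinner (x - y) z) = Re (cinner x z) - Re (cinner y (z::'a::complex_inner_space))"
  using cinner_add_left[of x "-y" z] Re_cinner_minus_left[of y z] by simp

lemma Re_cinner_diff_right: "Re (cinner z (x - y)) = Re (cinner z x) - Re (cinner z (y::'a::complex_inner_space))"
  using Re_cinner_diff_left Re_cinner_sym by metis

lemma parallelogram:
  fixes a b :: "'a::complex_inner_space"
  shows "(norm (a+b))^2 + (norm (a-b))^2 = 2*(norm a)^2 + 2*(norm b)^2"
  unfolding norm_sq_cinner
  by (simp add: cinner_add_left Re_cinner_add_right Re_cinner_diff_left Re_cinner_diff_right Re_cinner_sym[of b a] algebra_simps)

lemma midpoint_ineq:
  fixes a b :: "'a::complex_inner_space"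
  assumes "m \<le> norm ((1/2) *\<^sub>R (a+b))" "0 \<le> m"
  shows "(norm (a-b))^2 \<le> 2*(norm a)^2 + 2*(norm b)^2 - 4*m^2"
proof -
  have "norm ((1/2) *\<^sub>R (a+b)) = norm (a+b) / 2" by simp
  then have "2*m \<le> norm (a+b)" using assms by simp
  then have "(2*m)^2 \<le> (norm (a+b))^2" using assms(2) by (intro power_mono) auto
  then show ?thesis using parallelogram[of a b] by (simp add: power_mult_distrib)
qed


lemma conv_bound:
  assumes bl: "bounded_linear T" and l: "0 \<le> l" "l \<le> 1"
  shows "norm (T ((1-l) *\<^sub>R u + l *\<^sub>R w) - a) \<le> (1-l) * norm (T u - a) + l * norm (T w - a)"
proof -
  have "T ((1-l) *\<^sub>R u + l *\<^sub>R w) - a = (1-l) *\<^sub>R (T u - a) + l *\<^sub>R (T w - a)"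
    using bl by (simp add: linear_simps algebra_simps)
  also have "norm \<dots> \<le> norm ((1-l) *\<^sub>R (T u - a)) + norm (l *\<^sub>R (T w - a))"
    by (rule norm_triangle_ineq)
  also have "\<dots> = (1-l) * norm (T u - a) + l * norm (T w - a)"
    using l by simp
  finally show ?thesis .
qed

lemma ext_char:
  fixes T :: "'a::complex_hilbert_space \<Rightarrow> 'a"
  assumes bl: "bounded_linear T" and dense: "closure (range T) = UNIV" and ep: "\<epsilon> > 0"
  shows "norm (T (extremal_vector T x \<epsilon>) - x) \<le> \<epsilon> \<and>
         norm (extremal_vector T x \<epsilon>) = Inf {norm y | y. norm (T y - x) \<le> \<epsilon>}"
proof -
  define F where "F = {y. norm (T y - x) \<le> \<epsilon>}"
  define S where "S = {norm y | y. norm (T y - x) \<le> \<epsilon>}"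
  define m where "m = Inf S"
  have SF: "S = norm ` F" unfolding S_def F_def by auto
  have "x \<in> closure (range T)" using dense by simp
  then obtain w where "dist (T w) x < \<epsilon>" using ep unfolding closure_approachable by auto
  then have wF: "w \<in> F" unfolding F_def by (simp add: dist_norm)
  have Sne: "S \<noteq> {}" using wF SF by auto
  have bdd: "bdd_below S" unfolding SF by (rule bdd_belowI[of _ 0]) auto
  have lower: "m \<le> norm y" if "y \<in> F" for y
    unfolding m_def using that SF bdd by (auto intro: cInf_lower)
  have m0: "0 \<le> m" unfolding m_def using Sne SF by (auto intro: cInf_greatest)
  have mid: "(1 - 1/2) *\<^sub>R a + (1/2) *\<^sub>R b \<in> F" if "a \<in> F" "b \<in> F" for a b
  proof -
    have "norm (T ((1 - 1/2) *\<^sub>R a + (1/2) *\<^sub>R b) - x) \<le> (1 - 1/2) * norm (T a - x) + (1/2) * norm (T b - x)"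
      by (rule conv_bound[OF bl]) auto
    also have "\<dots> \<le> (1 - 1/2) * \<epsilon> + (1/2) * \<epsilon>" using that unfolding F_def by auto
    finally show ?thesis unfolding F_def by simp
  qed
  have Q: "(norm (a-b))^2 \<le> 2*(norm a)^2 + 2*(norm b)^2 - 4*m^2" if "a \<in> F" "b \<in> F" for a b
  proof -
    have "(1 - 1/2) *\<^sub>R a + (1/2) *\<^sub>R b = (1/2) *\<^sub>R (a + b)" by (simp add: algebra_simps)
    then have "m \<le> norm ((1/2) *\<^sub>R (a+b))" using lower[OF mid[OF that]] by simp
    then show ?thesis using m0 by (rule midpoint_ineq)
  qed
  have "\<forall>n. \<exists>y\<in>F. norm y < sqrt (m^2 + inverse (real (Suc n)))"
  proof
    fix n
    have "m < sqrt (m^2 + inverse (real (Suc n)))"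
    proof -
      have "m^2 < m^2 + inverse (real (Suc n))" by simp
      then have "sqrt (m^2) < sqrt (m^2 + inverse (real (Suc n)))" by (rule real_sqrt_less_mono)
      then show ?thesis using m0 by simp
    qed
    then obtain s where "s \<in> S" "s < sqrt (m^2 + inverse (real (Suc n)))"
      using cInf_lessD[OF Sne] unfolding m_def by blast
    then show "\<exists>y\<in>F. norm y < sqrt (m^2 + inverse (real (Suc n)))" using SF by auto
  qed
  then obtain ys where ysF: "\<And>n. ys n \<in> F" and ysn: "\<And>n. norm (ys n) < sqrt (m^2 + inverse (real (Suc n)))"
    by metis
  have ysq: "(norm (ys n))^2 \<le> m^2 + inverse (real (Suc n))" for n
  proof -
    have "(norm (ys n))^2 \<le> (sqrt (m^2 + inverse (real (Suc n))))^2"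
      using ysn[of n] by (intro power_mono) auto
    also have "\<dots> = m^2 + inverse (real (Suc n))" by (simp add: add_nonneg_nonneg)
    finally show ?thesis .
  qed
  have "Cauchy ys"
  proof (rule metric_CauchyI)
    fix e :: real assume e: "e > 0"
    obtain N :: nat where N: "4 / (e^2) < real N" using reals_Archimedean2 by blast
    have Npos: "0 < real N" using N e by (smt (verit) divide_nonneg_pos zero_less_power)
    have NN: "4 * inverse (real N) < e^2"
      using N e Npos by (simp add: field_simps)
    show "\<exists>M. \<forall>p\<ge>M. \<forall>q\<ge>M. dist (ys p) (ys q) < e"
    proof (intro exI allI impI)
      fix p q assume pq: "N \<le> p" "N \<le> q"
      have ip: "inverse (real (Suc p)) \<le> inverse (real N)" using pq Npos by (simp add: le_imp_inverse_le)
      have iq: "inverse (real (Suc q)) \<le> inverse (real N)" using pq Npos by (simp add: le_imp_inverse_le)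
      have "(norm (ys p - ys q))^2 \<le> 2*(norm (ys p))^2 + 2*(norm (ys q))^2 - 4*m^2"
        using Q ysF by blast
      also have "\<dots> \<le> 2 * inverse (real (Suc p)) + 2 * inverse (real (Suc q))"
        using ysq[of p] ysq[of q] by simp
      also have "\<dots> < e^2" using ip iq NN by simp
      finally have "(norm (ys p - ys q))^2 < e^2" .
      then have "norm (ys p - ys q) < e" using e by (simp add: power_less_imp_less_base)
      then show "dist (ys p) (ys q) < e" by (simp add: dist_norm)
    qed
  qed
  then obtain y where lim: "ys \<longlonglongrightarrow> y" using Cauchy_convergent convergent_def by blast
  have clF: "closed F" unfolding F_def
    by (intro closed_Collect_le continuous_intros bounded_linear.continuous_on[OF bl]) 
  have yF: "y \<in> F" by (rule closed_sequentially[OF clF ysF lim])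
  have "norm y \<le> m"
  proof (rule LIMSEQ_le)
    show "(\<lambda>n. norm (ys n)) \<longlonglongrightarrow> norm y" using lim by (rule tendsto_norm)
    have "(\<lambda>n. sqrt (m^2 + inverse (real (Suc n)))) \<longlonglongrightarrow> sqrt (m^2 + 0)"
      by (intro tendsto_intros LIMSEQ_inverse_real_of_nat)
    then show "(\<lambda>n. sqrt (m^2 + inverse (real (Suc n)))) \<longlonglongrightarrow> m" using m0 by simp
    show "\<exists>N. \<forall>n\<ge>N. norm (ys n) \<le> sqrt (m^2 + inverse (real (Suc n)))"
      using ysn less_imp_le by blast
  qed
  then have ym: "norm y = m" using lower[OF yF] by simp
  have "extremal_vector T x \<epsilon> = y"
    unfolding extremal_vector_def
  proof (rule the_equality)
    show "norm (T y - x) \<le> \<epsilon> \<and> norm y = Inf {norm y |y. norm (T y - x) \<le> \<epsilon>}"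
      using yF ym unfolding F_def m_def S_def by simp
    fix z assume "norm (T z - x) \<le> \<epsilon> \<and> norm z = Inf {norm y |y. norm (T y - x) \<le> \<epsilon>}"
    then have zF: "z \<in> F" and zm: "norm z = m" unfolding F_def m_def S_def by auto
    have "(norm (z - y))^2 \<le> 0" using Q[OF zF yF] zm ym by simp
    then show "z = y" by simp
  qed
  then show ?thesis using yF ym unfolding F_def m_def S_def by simp
qed


lemma ext_min:
  fixes T :: "'a::complex_hilbert_space \<Rightarrow> 'a"
  assumes bl: "bounded_linear T" and dense: "closure (range T) = UNIV" and ep: "\<epsilon> > 0"
    and z: "norm (T z - x) \<le> \<epsilon>"
  shows "norm (extremal_vector T x \<epsilon>) \<le> norm z"
proof -
  have "Inf {norm y | y. norm (T y - x) \<le> \<epsilon>} \<le> norm z"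
    by (rule cInf_lower) (use z in \<open>auto intro: bdd_belowI[of _ 0]\<close>)
  then show ?thesis using ext_char[OF bl dense ep, of x] by simp
qed

lemma ext_Q:
  fixes T :: "'a::complex_hilbert_space \<Rightarrow> 'a"
  assumes bl: "bounded_linear T" and dense: "closure (range T) = UNIV" and ep: "\<epsilon> > 0"
    and a: "norm (T a - x) \<le> \<epsilon>" and b: "norm (T b - x) \<le> \<epsilon>"
  shows "(norm (a-b))^2 \<le> 2*(norm a)^2 + 2*(norm b)^2 - 4*(norm (extremal_vector T x \<epsilon>))^2"
proof -
  have "norm (T ((1 - 1/2) *\<^sub>R a + (1/2) *\<^sub>R b) - x) \<le> (1 - 1/2) * norm (T a - x) + (1/2) * norm (T b - x)"
    by (rule conv_bound[OF bl]) auto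
  also have "\<dots> \<le> (1 - 1/2) * \<epsilon> + (1/2) * \<epsilon>" using a b by auto
  finally have "norm (T ((1/2) *\<^sub>R (a + b)) - x) \<le> \<epsilon>" by (simp add: algebra_simps)
  then have "norm (extremal_vector T x \<epsilon>) \<le> norm ((1/2) *\<^sub>R (a+b))" by (rule ext_min[OF bl dense ep])
  then show ?thesis by (rule midpoint_ineq) simp
qed

lemma push:
  fixes T :: "'a::real_normed_vector \<Rightarrow> 'b::real_normed_vector"
  assumes bl: "bounded_linear T" and d: "0 \<le> d" and et: "0 < et"
    and u: "norm (T u - a) \<le> \<epsilon> + d" and w: "norm (T w - a) \<le> \<epsilon> - et"
  shows "norm (T ((1 - d/(d+et)) *\<^sub>R u + (d/(d+et)) *\<^sub>R w) - a) \<le> \<epsilon>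
       \<and> norm (((1 - d/(d+et)) *\<^sub>R u + (d/(d+et)) *\<^sub>R w) - u) \<le> (d/et) * (norm w + norm u)"
proof
  define l where "l = d/(d+et)"
  have l0: "0 \<le> l" "l \<le> 1" unfolding l_def using d et by auto
  have "norm (T ((1 - l) *\<^sub>R u + l *\<^sub>R w) - a) \<le> (1-l) * norm (T u - a) + l * norm (T w - a)"
    by (rule conv_bound[OF bl l0])
  also have "\<dots> \<le> (1-l) * (\<epsilon> + d) + l * (\<epsilon> - et)"
    using l0 u w by (intro add_mono mult_left_mono) auto
  also have "\<dots> = \<epsilon>"
  proof -
    have "d + et \<noteq> 0" using d et by simp
    then have e1: "1 - l = et / (d + et)" unfolding l_def by (simp add: field_simps)
    have "(1-l) * (\<epsilon> + d) + l * (\<epsilon> - et) = (et * (\<epsilon> + d) + d * (\<epsilon> - et)) / (d + et)"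
      by (subst e1, simp only: l_def, simp add: add_divide_distrib)
    also have "\<dots> = \<epsilon> * (d + et) / (d + et)" by (simp add: algebra_simps)
    also have "\<dots> = \<epsilon>" using \<open>d + et \<noteq> 0\<close> by simp
    finally show ?thesis .
  qed
  finally show "norm (T ((1 - d/(d+et)) *\<^sub>R u + (d/(d+et)) *\<^sub>R w) - a) \<le> \<epsilon>" unfolding l_def .
  have "((1 - l) *\<^sub>R u + l *\<^sub>R w) - u = l *\<^sub>R (w - u)" by (simp add: algebra_simps)
  then have "norm (((1 - l) *\<^sub>R u + l *\<^sub>R w) - u) = l * norm (w - u)" using l0 by simp
  also have "\<dots> \<le> (d/et) * (norm w + norm u)"
  proof (rule mult_mono)
    show "l \<le> d/et" unfolding l_def using d et by (simp add: frac_le)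
    show "norm (w - u) \<le> norm w + norm u" by (rule norm_triangle_ineq4)
  qed (use d et in auto)
  finally show "norm (((1 - d/(d+et)) *\<^sub>R u + (d/(d+et)) *\<^sub>R w) - u) \<le> (d/et) * (norm w + norm u)"
    unfolding l_def .
qed


lemma ext_cont:
  fixes T :: "'a::complex_hilbert_space \<Rightarrow> 'a"
  assumes bl: "bounded_linear T" and dense: "closure (range T) = UNIV" and ep: "\<epsilon> > 0"
  shows "continuous_on UNIV (\<lambda>x. extremal_vector T x \<epsilon>)"
  unfolding continuous_on_iff
proof (intro ballI allI impI)
  fix x0 :: 'a and e :: real
  assume e: "e > 0"
  let ?ev = "\<lambda>x. extremal_vector T x \<epsilon>"
  define y where "y = ?ev x0"
  define m where "m = norm y"
  have "x0 \<in> closure (range T)" using dense by simp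
  then obtain w where "dist (T w) x0 < \<epsilon>/2" using ep unfolding closure_approachable
    by (metis half_gt_zero rangeE)
  then have w: "norm (T w - x0) \<le> \<epsilon> - \<epsilon>/2" by (simp add: dist_norm)
  have yF: "norm (T y - x0) \<le> \<epsilon>" using ext_char[OF bl dense ep] unfolding y_def by blast
  have m0: "0 \<le> m" unfolding m_def by simp
  define K where "K = (4/\<epsilon>) * (norm w + m)"
  define B where "B = norm w + 2*m"
  define K2 where "K2 = (2/\<epsilon>) * (norm w + B)"
  define L where "L = K + K2"
  define C where "C = 2*L*(2*m+L)"
  have K0: "0 \<le> K" unfolding K_def using ep m0 by simp
  have K20: "0 \<le> K2" unfolding K2_def B_def using ep m0 by simp
  have L0: "0 \<le> L" unfolding L_def using K0 K20 by simp
  have C0: "0 \<le> C" unfolding C_def using L0 m0 by simp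
  define dd where "dd = min (\<epsilon>/4) (min 1 (min (e/(2*K2+1)) (e^2/(4*C+1))))"
  have dd0: "dd > 0" unfolding dd_def using ep e K20 C0 by simp
  show "\<exists>d>0. \<forall>x'\<in>UNIV. dist x' x0 < d \<longrightarrow> dist (?ev x') (?ev x0) < e"
  proof (intro exI conjI ballI impI)
    show "dd > 0" by (rule dd0)
    fix x' :: 'a assume "dist x' x0 < dd"
    define \<delta> where "\<delta> = norm (x' - x0)"
    have dlt: "\<delta> < dd" using \<open>dist x' x0 < dd\<close> unfolding \<delta>_def by (simp add: dist_norm)
    have d0: "0 \<le> \<delta>" unfolding \<delta>_def by simp
    have d4: "\<delta> \<le> \<epsilon>/4" and d1: "\<delta> \<le> 1" and dK2: "\<delta> < e/(2*K2+1)" and dC: "\<delta> < e^2/(4*C+1)"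
      using dlt unfolding dd_def by auto
    define y' where "y' = ?ev x'"
    define m' where "m' = norm y'"
    have y'F: "norm (T y' - x') \<le> \<epsilon>" using ext_char[OF bl dense ep] unfolding y'_def by blast
    have tri: "norm (T v - b) \<le> norm (T v - a) + norm (a - b)" for v a b :: 'a
      using norm_triangle_ineq[of "T v - a" "a - b"] by simp
    have nx: "norm (x0 - x') = \<delta>" unfolding \<delta>_def by (simp add: norm_minus_commute)
    have "norm (T y - x') \<le> \<epsilon> + \<delta>" using tri[of y x' x0] yF nx by simp
    moreover have "norm (T w - x') \<le> \<epsilon> - \<epsilon>/4" using tri[of w x' x0] w nx d4 by simp
    ultimately obtain z' where z'F: "norm (T z' - x') \<le> \<epsilon>" and z'y: "norm (z' - y) \<le> (\<delta>/(\<epsilon>/4)) * (norm w + norm y)"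
      using push[OF bl d0, of "\<epsilon>/4" y x' \<epsilon> w] ep by auto
    have "m' \<le> norm z'" unfolding m'_def y'_def by (rule ext_min[OF bl dense ep z'F])
    also have "\<dots> \<le> norm y + norm (z' - y)" using norm_triangle_ineq[of y "z' - y"] by simp
    also have "\<dots> \<le> m + K * \<delta>" using z'y unfolding K_def m_def using ep by (simp add: field_simps)
    finally have m'le: "m' \<le> m + K * \<delta>" .
    have "K * \<delta> \<le> K * (\<epsilon>/4)" using K0 d4 by (intro mult_left_mono)
    also have "\<dots> = norm w + m" unfolding K_def using ep by simp
    finally have m'B: "m' \<le> B" using m'le unfolding B_def by simp
    have "norm (T y' - x0) \<le> \<epsilon> + \<delta>" using tri[of y' x0 x'] y'F unfolding \<delta>_def by simp
    then obtain z where zF: "norm (T z - x0) \<le> \<epsilon>" and zy': "norm (z - y') \<le> (\<delta>/(\<epsilon>/2)) * (norm w + norm y')"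
      using push[OF bl d0, of "\<epsilon>/2" y' x0 \<epsilon> w] ep w by auto
    have "(\<delta>/(\<epsilon>/2)) * (norm w + norm y') \<le> (\<delta>/(\<epsilon>/2)) * (norm w + B)"
      using m'B d0 ep unfolding m'_def by (intro mult_left_mono) auto
    also have "\<dots> = K2 * \<delta>" unfolding K2_def using ep by simp
    finally have zy'2: "norm (z - y') \<le> K2 * \<delta>" using zy' by simp
    have "norm z \<le> norm y' + norm (z - y')" using norm_triangle_ineq[of y' "z - y'"] by simp
    also have "\<dots> \<le> m + L * \<delta>" using m'le zy'2 unfolding L_def m'_def by (simp add: algebra_simps)
    finally have nz: "norm z \<le> m + L * \<delta>" .
    have "(norm (z - y))^2 \<le> 2*(norm z)^2 + 2*(norm y)^2 - 4*m^2"
      using ext_Q[OF bl dense ep zF yF] unfolding m_def y_def by simp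
    also have "\<dots> = 2*((norm z)^2 - m^2)" unfolding m_def by simp
    also have "\<dots> \<le> 2*((m + L*\<delta>)^2 - m^2)" using nz by (simp add: power_mono)
    also have "\<dots> = 2*L*\<delta>*(2*m + L*\<delta>)" by (simp add: power2_eq_square algebra_simps)
    also have "\<dots> \<le> 2*L*\<delta>*(2*m + L)"
      using L0 d0 d1 m0 by (intro mult_left_mono add_left_mono) (auto simp: mult_left_le)
    also have "\<dots> = C * \<delta>" unfolding C_def by simp
    also have "\<dots> \<le> C * (e^2/(4*C+1))" using C0 dC by (intro mult_left_mono) auto
    also have "\<dots> < e^2/4"
    proof -
      have "C * (e^2/(4*C+1)) = e^2 * (C/(4*C+1))" by simp
      also have "\<dots> < e^2 * (1/4)" using C0 e by (intro mult_strict_left_mono) (auto simp: field_simps)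
      finally show ?thesis by simp
    qed
    also have "\<dots> = (e/2)^2" by (simp add: power_divide)
    finally have "(norm (z - y))^2 < (e/2)^2" .
    then have "norm (z - y) < e/2" by (rule power_less_imp_less_base) (use e in simp)
    moreover have "norm (z - y') < e/2"
    proof -
      have "K2 * \<delta> \<le> K2 * (e/(2*K2+1))" using K20 dK2 by (intro mult_left_mono) auto
      also have "\<dots> = e * (K2/(2*K2+1))" by simp
      also have "\<dots> < e * (1/2)" using K20 e by (intro mult_strict_left_mono) (auto simp: field_simps)
      finally show ?thesis using zy'2 by simp
    qed
    ultimately have "norm (y' - y) < e"
      using norm_triangle_ineq[of "y' - z" "z - y"] by (simp add: norm_minus_commute)
    then show "dist (?ev x') (?ev x0) < e" unfolding y_def y'_def by (simp add: dist_norm)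
  qed
qed


theorem mainTheorem8:
  fixes T :: "'a::complex_hilbert_space \<Rightarrow> 'a" and \<epsilon> :: real
  assumes "separable_space TYPE('a)"
    and "infinite_dimensional TYPE('a)"
    and "bounded_clinear T"
    and "closure (range T) = UNIV"
    and "\<epsilon> > 0"
  shows "continuous_on {x0. norm x0 > \<epsilon>} (\<lambda>x0. extremal_vector T x0 \<epsilon>)"
proof -
  have bl: "bounded_linear T" using assms(3) unfolding bounded_clinear_def by simp
  show ?thesis
    by (rule continuous_on_subset[OF ext_cont[OF bl assms(4) assms(5)]]) simp
qed

end
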